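(* Let $\lambda,\mathfrak{g}_s,\alpha,\Sigma,Z_1(T)$ and $\bar W(X)=(X-\alpha)\sqrt{(X+\alpha)^2-2\mathfrak{g}_s/\alpha}$ be as below. For $X>\alpha$ let $Z_{1,X}(T)=Z_1\big(T+Z_1^{-1}(X)\big)$ for $T\ge0$, where $Z_1^{-1}$ is the inverse of the strictly decreasing bijection $Z_1:(0,\infty)\to(\alpha,\infty)$, and for $Y>0$ define $$G(X,Y;T)=\frac{Z_{1,X}'(T)}{Z_{1,X}'(0)}\cdot\frac{1}{Y+Z_{1,X}(T)}.$$ Then $G(X,Y;0)=\frac{1}{X+Y}$, $G$ satisfies $$\frac{\partial}{\partial T}G(X,Y;T)=-\frac{\partial}{\partial X}\Big(\bar W(X)\,G(X,Y;T)\Big),$$ and $$\lim_{Y\to\infty}Y\int_0^\infty G(X,Y;T)\,dT=\frac{\alpha-X}{Z_1'(Z_1^{-1}(X))}=\frac{1}{\sqrt{(X+\alpha)^2-2\mathfrak{g}_s/\alpha}}.$$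
   Context: Standing assumptions: $\lambda,\mathfrak{g}_s>0$, $\alpha$ is a positive real root of $\alpha^3-\lambda\alpha+\mathfrak{g}_s=0$ with $2\alpha^3>\mathfrak{g}_s$, $\Sigma=\tfrac12\sqrt{4\alpha^2-2\mathfrak{g}_s/\alpha}>0$, and $Z_1(T)=\alpha+\dfrac{\Sigma^2}{\sinh(\Sigma T)[\Sigma\cosh(\Sigma T)+\alpha\sinh(\Sigma T)]}$ for $T>0$. Primes denote derivatives in $T$. $G$ is the continuum loop propagator of generalized CDT and the limit is the (marked) cap function. *)

theory Defs
  imports "HOL-Analysis.Analysis"
begin

definition Sigma_cdt :: "real \<Rightarrow> real \<Rightarrow> real" where
  "Sigma_cdt \<alpha> gs = (1/2) * sqrt (4 * \<alpha>^2 - 2 * gs / \<alpha>)"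

definition Z1 :: "real \<Rightarrow> real \<Rightarrow> real \<Rightarrow> real" where
  "Z1 \<alpha> gs T = (let S = Sigma_cdt \<alpha> gs in
     \<alpha> + S^2 / (sinh (S * T) * (S * cosh (S * T) + \<alpha> * sinh (S * T))))"

definition Z1inv :: "real \<Rightarrow> real \<Rightarrow> real \<Rightarrow> real" where
  "Z1inv \<alpha> gs X = inv_into {0<..} (Z1 \<alpha> gs) X"

definition Z1X :: "real \<Rightarrow> real \<Rightarrow> real \<Rightarrow> real \<Rightarrow> real" where
  "Z1X \<alpha> gs X T = Z1 \<alpha> gs (T + Z1inv \<alpha> gs X)"

definition Gprop :: "real \<Rightarrow> real \<Rightarrow> real \<Rightarrow> real \<Rightarrow> real \<Rightarrow> real" where
  "Gprop \<alpha> gs X Y T =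
     deriv (Z1X \<alpha> gs X) T / deriv (Z1X \<alpha> gs X) 0 * (1 / (Y + Z1X \<alpha> gs X T))"

definition Wbar :: "real \<Rightarrow> real \<Rightarrow> real \<Rightarrow> real" where
  "Wbar \<alpha> gs X = (X - \<alpha>) * sqrt ((X + \<alpha>)^2 - 2 * gs / \<alpha>)"

end

theory Submission imports Defs "HOL-Real_Asymp.Real_Asymp" begin
lemma "X > (a::real) \<Longrightarrow> a > 0 \<Longrightarrow> ((\<lambda>Y. Y * (ln (Y+X) - ln (Y+a))) \<longlongrightarrow> (X-a)) at_top"
  by real_asymp

lemma sq_ident:
  fixes S a q p :: real
  assumes "q^2 = 1 + p^2"
  shows "(S*(q^2+p^2)+2*a * p * q)^2 = 4*a*(p*(S * q+a * p)) + S^2 + 4*(p*(S * q+a * p))^2"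
  using assms by algebra

lemma sqrt_ident:
  fixes S a q p :: real
  assumes "q^2 = 1 + p^2" "S > 0" "a > 0" "p > 0" "q > 0"
  defines "D \<equiv> p*(S * q+a * p)"
  shows "sqrt ((a + S^2/D + a)^2 - (4*a^2 - 4*S^2)) = S*(S*(q^2+p^2)+2*a * p * q)/D"
proof -
  have D: "D > 0" using assms unfolding D_def by (intro mult_pos_pos add_pos_pos) auto
  have "(a + S^2/D + a)^2 - (4*a^2 - 4*S^2) = S^2 * (4*a*D + S^2 + 4*D^2) / D^2"
    using D by (simp add: field_simps power2_eq_square)
  also have "\<dots> = (S*(S*(q^2+p^2)+2*a * p * q)/D)^2"
    using sq_ident[OF assms(1), of S a] unfolding D_def[symmetric] by (simp add: power_divide power_mult_distrib)
  finally show ?thesis using D assms by (simp add: real_sqrt_abs)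
qed

lemma Sig_facts:
  fixes gs a :: real
  assumes "gs > 0" "a > 0" "2*a^3 > gs"
  shows "Sigma_cdt a gs > 0" "2*gs/a = 4*a^2 - 4*(Sigma_cdt a gs)^2"
proof -
  have pos: "4*a^2 - 2*gs/a > 0"
  proof -
    have "2*gs/a < 4*a^3/a" using assms by (intro divide_strict_right_mono) auto
    also have "4*a^3/a = 4*a^2" using assms by (simp add: power3_eq_cube power2_eq_square)
    finally show ?thesis by simp
  qed
  then show "Sigma_cdt a gs > 0" unfolding Sigma_cdt_def by simp
  have "(Sigma_cdt a gs)^2 = (4*a^2 - 2*gs/a)/4" unfolding Sigma_cdt_def using pos
    by (simp add: power_mult_distrib power_divide)
  then show "2*gs/a = 4*a^2 - 4*(Sigma_cdt a gs)^2" by simp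
qed

lemma Z1_eq: "Z1 a gs = (\<lambda>T. a + (Sigma_cdt a gs)^2 / (sinh (Sigma_cdt a gs * T) * (Sigma_cdt a gs * cosh (Sigma_cdt a gs * T) + a * sinh (Sigma_cdt a gs * T))))"
  by (rule ext) (simp add: Z1_def Let_def)

lemma Z1_deriv:
  fixes gs a T :: real
  assumes "gs > 0" "a > 0" "2*a^3 > gs" "T > 0"
  shows "(Z1 a gs has_real_derivative (- Wbar a gs (Z1 a gs T))) (at T)"
    and "Z1 a gs T > a"
proof -
  define S where "S = Sigma_cdt a gs"
  have S: "S > 0" "2*gs/a = 4*a^2 - 4*S^2" using Sig_facts[OF assms(1-3)] unfolding S_def by auto
  define p where "p = sinh (S*T)"
  define q where "q = cosh (S*T)"
  have p: "p > 0" using S assms unfolding p_def by simp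
  have q: "q > 0" "q^2 = 1 + p^2" unfolding p_def q_def by (simp_all add: cosh_square_eq)
  define D where "D = p*(S * q + a * p)"
  have D: "D > 0" unfolding D_def using p q S assms by (intro mult_pos_pos add_pos_pos) auto
  have Zeq: "Z1 a gs T = a + S^2/D" unfolding Z1_eq S_def[symmetric] D_def p_def q_def by simp
  show "Z1 a gs T > a" using Zeq D S by simp
  have W: "Wbar a gs (Z1 a gs T) = (S^2/D) * (S*(S*(q^2+p^2)+2*a * p * q)/D)"
    unfolding Wbar_def Zeq S(2) using sqrt_ident[OF q(2) S(1) assms(2) p q(1)] unfolding D_def
    by simp
  have dD: "((\<lambda>T. sinh (S * T) * (S * cosh (S * T) + a * sinh (S * T))) has_real_derivative
      (S * q * (S * q + a * p) + p * (S * (S * p) + a * (S * q)))) (at T)"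
    unfolding p_def q_def
    by (auto intro!: derivative_eq_intros simp: algebra_simps)
  have Dne: "sinh (S * T) * (S * cosh (S * T) + a * sinh (S * T)) \<noteq> 0" using D unfolding D_def p_def q_def by (metis less_irrefl)
  have Dne2: "S \<noteq> 0" "T \<noteq> 0" "S * cosh (S * T) + a * sinh (S * T) \<noteq> 0" using Dne S assms by auto
  have "((\<lambda>T. a + S^2 / (sinh (S * T) * (S * cosh (S * T) + a * sinh (S * T)))) has_real_derivative
      (- (S^2 * (S * q * (S * q + a * p) + p * (S * (S * p) + a * (S * q))) / D^2))) (at T)"
    apply (rule DERIV_cong)
     apply (rule DERIV_add[OF DERIV_const DERIV_divide[OF DERIV_const dD Dne]])
    unfolding D_def p_def q_def using Dne2 by (simp add: power2_eq_square divide_simps)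
  moreover have "- (S^2 * (S * q * (S * q + a * p) + p * (S * (S * p) + a * (S * q))) / D^2) = - Wbar a gs (Z1 a gs T)"
    unfolding W using D by (simp add: field_simps power2_eq_square)
  ultimately show "(Z1 a gs has_real_derivative (- Wbar a gs (Z1 a gs T))) (at T)"
    unfolding Z1_eq S_def[symmetric] by simp
qed

lemma Z1_lims_gen:
  fixes S a :: real assumes "S > 0" "a > 0"
  shows "((\<lambda>T. a + S^2/(sinh(S*T)*(S * cosh(S*T)+a * sinh(S*T)))) \<longlongrightarrow> a) at_top"
    "filterlim (\<lambda>T. a + S^2/(sinh(S*T)*(S * cosh(S*T)+a * sinh(S*T)))) at_top (at_right 0)"
  using assms by real_asymp+

context
  fixes gs a :: real
  assumes gs: "gs > 0" and a: "a > 0" and ga: "2*a^3 > gs"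
begin

lemma W_pos: "v > a \<Longrightarrow> Wbar a gs v > 0"
proof -
  assume v: "v > a"
  have S: "Sigma_cdt a gs > 0" "2*gs/a = 4*a^2 - 4*(Sigma_cdt a gs)^2" using Sig_facts[OF gs a ga] by auto
  have "(2*a)^2 < (v+a)^2" using v a by (intro power_strict_mono) auto
  moreover have "(Sigma_cdt a gs)^2 > 0" using S(1) by simp
  moreover have "(2*a)^2 = 4*a^2" by (simp add: power_mult_distrib)
  ultimately have "(v+a)^2 - (4*a^2 - 4*(Sigma_cdt a gs)^2) > 0" by linarith
  then have "(v+a)^2 - 2*gs/a > 0" unfolding S(2) .
  then show ?thesis unfolding Wbar_def using v by simp
qed

lemma Z1_gt: "T > 0 \<Longrightarrow> Z1 a gs T > a" using Z1_deriv(2)[OF gs a ga] .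
lemma Z1_der: "T > 0 \<Longrightarrow> (Z1 a gs has_real_derivative (- Wbar a gs (Z1 a gs T))) (at T)"
  using Z1_deriv(1)[OF gs a ga] .
lemma Z1_cont: "T > 0 \<Longrightarrow> isCont (Z1 a gs) T" using Z1_der DERIV_isCont by blast

lemma Z1_dec: "0 < x \<Longrightarrow> x < y \<Longrightarrow> Z1 a gs y < Z1 a gs x"
  by (rule DERIV_neg_imp_decreasing) (auto intro!: exI[of _ "- Wbar a gs (Z1 a gs _)"] Z1_der W_pos Z1_gt)

lemma Z1_mono: "strict_antimono_on {0<..} (Z1 a gs)"
  by (auto simp: monotone_on_def intro: Z1_dec)

lemma Z1_inj: "inj_on (Z1 a gs) {0<..}"
  by (rule inj_onI) (metis Z1_dec greaterThan_iff linorder_neqE_linordered_idom less_irrefl)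

lemma Z1_lims: "((Z1 a gs) \<longlongrightarrow> a) at_top" "filterlim (Z1 a gs) at_top (at_right 0)"
  using Z1_lims_gen[OF Sig_facts(1)[OF gs a ga] a] unfolding Z1_eq by auto

lemma Z1_bij: "bij_betw (Z1 a gs) {0<..} {a<..}"
proof (rule bij_betw_imageI[OF Z1_inj])
  show "Z1 a gs ` {0<..} = {a<..}"
  proof
    show "Z1 a gs ` {0<..} \<subseteq> {a<..}" using Z1_gt by auto
    show "{a<..} \<subseteq> Z1 a gs ` {0<..}"
    proof
      fix X assume X: "X \<in> {a<..}"
      have "eventually (\<lambda>T. Z1 a gs T > X) (at_right 0)"
        using Z1_lims(2) by (simp add: filterlim_at_top_dense)
      moreover have "eventually (\<lambda>T. T > 0) (at_right (0::real))" by (simp add: eventually_at_right_less)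
      ultimately have "eventually (\<lambda>T. Z1 a gs T > X \<and> T > 0) (at_right 0)" by (rule eventually_conj)
      then obtain T1 where T1: "T1 > 0" "Z1 a gs T1 > X"
        using eventually_happens'[OF trivial_limit_at_right_real] by blast
      have "eventually (\<lambda>T. Z1 a gs T < X) at_top"
        using Z1_lims(1) X by (simp add: order_tendstoD(2))
      then obtain T2' where T2': "\<And>T. T \<ge> T2' \<Longrightarrow> Z1 a gs T < X" by (auto simp: eventually_at_top_linorder)
      define T2 where "T2 = max T2' (T1 + 1)"
      have T2: "Z1 a gs T2 < X" "T1 \<le> T2" using T2' unfolding T2_def by auto
      obtain T where T: "T1 \<le> T" "T \<le> T2" "Z1 a gs T = X"
        using IVT2[of "Z1 a gs" T2 X T1] T2 T1 Z1_cont by force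
      then show "X \<in> Z1 a gs ` {0<..}" using T1 by auto
    qed
  qed
qed

lemma Z1inv_props: "X > a \<Longrightarrow> Z1inv a gs X > 0 \<and> Z1 a gs (Z1inv a gs X) = X"
  using Z1_bij unfolding Z1inv_def bij_betw_def
  by (metis f_inv_into_f greaterThan_iff inv_into_into)

lemma Z1inv_f: "T > 0 \<Longrightarrow> Z1inv a gs (Z1 a gs T) = T"
  using Z1_inj unfolding Z1inv_def by (simp add: inv_into_f_f)

lemma Z1inv_der: "X > a \<Longrightarrow> (Z1inv a gs has_real_derivative inverse (- Wbar a gs X)) (at X)"
proof -
  assume X: "X > a"
  define s where "s = Z1inv a gs X"
  have s: "s > 0" "Z1 a gs s = X" using Z1inv_props[OF X] unfolding s_def by auto
  have cont: "isCont (Z1inv a gs) X"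
  proof -
    have "isCont (Z1inv a gs) (Z1 a gs s)"
    proof (rule isCont_inverse_function[where d="s/2" and f="Z1 a gs" and g="Z1inv a gs" and x=s])
      have zp: "\<And>z. \<bar>z - s\<bar> \<le> s/2 \<Longrightarrow> z > 0" using s by arith
      show "0 < s/2" using s by simp
      show "\<And>z. \<bar>z - s\<bar> \<le> s/2 \<Longrightarrow> Z1inv a gs (Z1 a gs z) = z" using zp Z1inv_f by blast
      show "\<And>z. \<bar>z - s\<bar> \<le> s/2 \<Longrightarrow> isCont (Z1 a gs) z" using zp Z1_cont by blast
    qed
    then show ?thesis using s by simp
  qed
  have d: "(Z1 a gs has_real_derivative (- Wbar a gs X)) (at (Z1inv a gs X))"
    using Z1_der[OF s(1)] s unfolding s_def by simp
  have inj: "\<And>y. a < y \<Longrightarrow> y < X + 1 \<Longrightarrow> Z1 a gs (Z1inv a gs y) = y"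
    using Z1inv_props by blast
  have ne: "- Wbar a gs X \<noteq> 0" using W_pos[OF X] by simp
  show ?thesis
    by (rule DERIV_inverse_function[OF d ne _ _ inj cont]) (use X in auto)
qed


lemma sqarg_pos: "v > a \<Longrightarrow> (v+a)^2 - 2*gs/a > 0"
proof -
  assume v: "v > a"
  have S: "Sigma_cdt a gs > 0" "2*gs/a = 4*a^2 - 4*(Sigma_cdt a gs)^2" using Sig_facts[OF gs a ga] by auto
  have "(2*a)^2 < (v+a)^2" using v a by (intro power_strict_mono) auto
  moreover have "(Sigma_cdt a gs)^2 > 0" using S(1) by simp
  moreover have "(2*a)^2 = 4*a^2" by (simp add: power_mult_distrib)
  ultimately have "(v+a)^2 - (4*a^2 - 4*(Sigma_cdt a gs)^2) > 0" by linarith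
  then show "(v+a)^2 - 2*gs/a > 0" unfolding S(2) .
qed

lemma Z1X_eq: "Z1X a gs X = (\<lambda>T. Z1 a gs (T + Z1inv a gs X))"
  by (rule ext) (simp add: Z1X_def)

lemma deriv_Z1X: "X > a \<Longrightarrow> t + Z1inv a gs X > 0 \<Longrightarrow>
   deriv (Z1X a gs X) t = - Wbar a gs (Z1 a gs (t + Z1inv a gs X))"
  unfolding Z1X_eq by (rule DERIV_imp_deriv) (use Z1_der DERIV_shift in blast)

definition FF :: "real \<Rightarrow> real \<Rightarrow> real" where "FF Y v = Wbar a gs v / (Y + v)"

lemma Gform: "X > a \<Longrightarrow> Y > 0 \<Longrightarrow> t + Z1inv a gs X > 0 \<Longrightarrow>
   Gprop a gs X Y t = FF Y (Z1 a gs (t + Z1inv a gs X)) / Wbar a gs X"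
proof -
  assume X: "X > a" and Y: "Y > 0" and t: "t + Z1inv a gs X > 0"
  have s: "Z1inv a gs X > 0" "Z1 a gs (Z1inv a gs X) = X" using Z1inv_props[OF X] by auto
  have v: "Z1 a gs (t + Z1inv a gs X) > a" using Z1_gt t by blast
  show ?thesis
    unfolding Gprop_def deriv_Z1X[OF X t] deriv_Z1X[OF X, of 0, simplified, OF s(1)] s(2) FF_def
    using W_pos[OF X] W_pos[OF v] Y X v by (simp add: Z1X_def field_simps)
qed

lemma G0: "X > a \<Longrightarrow> Y > 0 \<Longrightarrow> Gprop a gs X Y 0 = 1 / (X + Y)"
proof -
  assume X: "X > a" and Y: "Y > 0"
  have p: "Z1inv a gs X > 0" "Z1 a gs (Z1inv a gs X) = X" using Z1inv_props[OF X] by auto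
  have "Gprop a gs X Y 0 = FF Y X / Wbar a gs X" using Gform[OF X Y, of 0] p by simp
  also have "\<dots> = 1 / (X + Y)" unfolding FF_def using W_pos[OF X] by (simp add: add.commute)
  finally show ?thesis .
qed

lemma FF_der: "Y > 0 \<Longrightarrow> v > a \<Longrightarrow> \<exists>F'. (FF Y has_real_derivative F') (at v)"
proof -
  assume Y: "Y > 0" and v: "v > a"
  have d1: "((\<lambda>v. (v+a)^2 - 2*gs/a) has_real_derivative 2*(v+a)) (at v)"
    by (auto intro!: derivative_eq_intros)
  have d2: "((\<lambda>v. sqrt ((v+a)^2 - 2*gs/a)) has_real_derivative inverse (sqrt ((v+a)^2 - 2*gs/a)) / 2 * (2*(v+a))) (at v)"
    by (rule DERIV_chain2[OF DERIV_real_sqrt[OF sqarg_pos[OF v]] d1])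
  have d3: "((\<lambda>v. v - a) has_real_derivative 1) (at v)" by (auto intro!: derivative_eq_intros)
  have ne: "Y + v \<noteq> 0" using Y v a by simp
  show ?thesis unfolding FF_def Wbar_def
    using DERIV_divide[OF DERIV_mult[OF d3 d2] DERIV_add[OF DERIV_const DERIV_ident] ne] by blast
qed

lemma PDE: "X > a \<Longrightarrow> Y > 0 \<Longrightarrow> T \<ge> 0 \<Longrightarrow>
  (\<exists>D. ((\<lambda>t. Gprop a gs X Y t) has_real_derivative D) (at T within {0..}) \<and>
            ((\<lambda>x. Wbar a gs x * Gprop a gs x Y T) has_real_derivative (- D)) (at X))"
proof -
  assume X: "X > a" and Y: "Y > 0" and T: "T \<ge> 0"
  have p: "Z1inv a gs X > 0" "Z1 a gs (Z1inv a gs X) = X" using Z1inv_props[OF X] by auto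
  have Ts: "T + Z1inv a gs X > 0" using p T by simp
  have v: "Z1 a gs (T + Z1inv a gs X) > a" using Z1_gt[OF Ts] .
  obtain F' where F': "(FF Y has_real_derivative F') (at (Z1 a gs (T + Z1inv a gs X)))"
    using FF_der[OF Y v] by blast
  have hZ: "(Z1 a gs has_real_derivative (- Wbar a gs (Z1 a gs (T + Z1inv a gs X)))) (at (T + Z1inv a gs X))"
    using Z1_der[OF Ts] .
  have c1: "((\<lambda>x. FF Y (Z1 a gs x)) has_real_derivative F' * (- Wbar a gs (Z1 a gs (T + Z1inv a gs X)))) (at (T + Z1inv a gs X))"
    by (rule DERIV_chain2[OF F' hZ])
  have c2: "((\<lambda>t. FF Y (Z1 a gs (t + Z1inv a gs X))) has_real_derivative F' * (- Wbar a gs (Z1 a gs (T + Z1inv a gs X)))) (at T)"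
    using c1 DERIV_shift[of "\<lambda>x. FF Y (Z1 a gs x)" _ T "Z1inv a gs X"] by simp
  define D where "D = F' * (- Wbar a gs (Z1 a gs (T + Z1inv a gs X))) / Wbar a gs X"
  have dt: "((\<lambda>t. FF Y (Z1 a gs (t + Z1inv a gs X)) / Wbar a gs X) has_real_derivative D) (at T)"
    unfolding D_def by (rule DERIV_cdivide[OF c2])
  have dtw: "((\<lambda>t. Gprop a gs X Y t) has_real_derivative D) (at T within {0..})"
  proof (rule has_field_derivative_transform_within[OF has_field_derivative_at_within[OF dt] zero_less_one])
    show "T \<in> {0..}" using T by simp
    fix x :: real assume "x \<in> {0..}"
    then have "x + Z1inv a gs X > 0" using p by simp
    then show "FF Y (Z1 a gs (x + Z1inv a gs X)) / Wbar a gs X = Gprop a gs X Y x"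
      using Gform[OF X Y] by simp
  qed
  have hs: "(Z1inv a gs has_real_derivative inverse (- Wbar a gs X)) (at X)" using Z1inv_der[OF X] .
  have ha: "((\<lambda>x. T + Z1inv a gs x) has_real_derivative 0 + inverse (- Wbar a gs X)) (at X)"
    by (rule DERIV_add[OF DERIV_const hs])
  have c3: "((\<lambda>x. FF Y (Z1 a gs (T + Z1inv a gs x))) has_real_derivative
      F' * (- Wbar a gs (Z1 a gs (T + Z1inv a gs X))) * (0 + inverse (- Wbar a gs X))) (at X)"
    by (rule DERIV_chain2[OF c1 ha])
  have c4: "((\<lambda>x. FF Y (Z1 a gs (T + Z1inv a gs x))) has_real_derivative - D) (at X)"
    using c3 W_pos[OF X] unfolding D_def by (simp add: field_simps)
  have dx: "((\<lambda>x. Wbar a gs x * Gprop a gs x Y T) has_real_derivative - D) (at X)"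
  proof (rule has_field_derivative_transform_within_open[OF c4, of "{a<..}"])
    show "open {a<..}" by simp
    show "X \<in> {a<..}" using X by simp
    fix x assume x: "x \<in> {a<..}"
    then have x': "x > a" by simp
    have "T + Z1inv a gs x > 0" using Z1inv_props[OF x'] T by simp
    then show "FF Y (Z1 a gs (T + Z1inv a gs x)) = Wbar a gs x * Gprop a gs x Y T"
      using Gform[OF x' Y, of T] W_pos[OF x'] by simp
  qed
  show ?thesis using dtw dx by blast
qed


lemma Gint: "X > a \<Longrightarrow> Y > 0 \<Longrightarrow>
  ((\<lambda>T. Gprop a gs X Y T) has_integral (ln (Y + X) - ln (Y + a)) / Wbar a gs X) {0..}"
proof -
  assume X: "X > a" and Y: "Y > 0"
  have p: "Z1inv a gs X > 0" "Z1 a gs (Z1inv a gs X) = X" using Z1inv_props[OF X] by auto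
  have WX: "Wbar a gs X > 0" using W_pos[OF X] .
  define A where "A = (\<lambda>t. - ln (Y + Z1 a gs (t + Z1inv a gs X)) / Wbar a gs X)"
  have dA: "(A has_real_derivative Gprop a gs X Y t) (at t)" if t: "t \<ge> 0" for t
  proof -
    have ts: "t + Z1inv a gs X > 0" using t p by simp
    have v: "Z1 a gs (t + Z1inv a gs X) > a" using Z1_gt[OF ts] .
    have pos: "Y + Z1 a gs (t + Z1inv a gs X) > 0" using v Y a by simp
    have g: "((\<lambda>x. Y + Z1 a gs x) has_real_derivative 0 + - Wbar a gs (Z1 a gs (t + Z1inv a gs X))) (at (t + Z1inv a gs X))"
      by (rule DERIV_add[OF DERIV_const Z1_der[OF ts]])
    have l1: "((\<lambda>x. ln (Y + Z1 a gs x)) has_real_derivative inverse (Y + Z1 a gs (t + Z1inv a gs X)) * (0 + - Wbar a gs (Z1 a gs (t + Z1inv a gs X)))) (at (t + Z1inv a gs X))"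
      by (rule DERIV_chain2[OF DERIV_ln[OF pos] g])
    have l2: "((\<lambda>x. ln (Y + Z1 a gs (x + Z1inv a gs X))) has_real_derivative inverse (Y + Z1 a gs (t + Z1inv a gs X)) * (0 + - Wbar a gs (Z1 a gs (t + Z1inv a gs X)))) (at t)"
      using l1 DERIV_shift[of "\<lambda>x. ln (Y + Z1 a gs x)" _ t "Z1inv a gs X"] by simp
    have l3: "(A has_real_derivative - (inverse (Y + Z1 a gs (t + Z1inv a gs X)) * (0 + - Wbar a gs (Z1 a gs (t + Z1inv a gs X)))) / Wbar a gs X) (at t)"
      unfolding A_def by (rule DERIV_cdivide[OF DERIV_minus[OF l2]])
    show ?thesis using l3 Gform[OF X Y ts] unfolding FF_def by (simp add: field_simps)
  qed
  have nonneg: "Gprop a gs X Y t \<ge> 0" if t: "t \<ge> 0" for t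
  proof -
    have ts: "t + Z1inv a gs X > 0" using t p by simp
    have v: "Z1 a gs (t + Z1inv a gs X) > a" using Z1_gt[OF ts] .
    show ?thesis using Gform[OF X Y ts] W_pos[OF v] WX v Y a unfolding FF_def by simp
  qed
  have hint: "((\<lambda>T. Gprop a gs X Y T) has_integral A y - A 0) {0..y}" if y: "y \<ge> 0" for y
    by (rule fundamental_theorem_of_calculus[OF y])
       (auto simp: has_real_derivative_iff_has_vector_derivative[symmetric] intro!: has_field_derivative_at_within dA)
  have "((\<lambda>T. Gprop a gs X Y T) has_integral (- ln (Y + a) / Wbar a gs X - A 0)) {0..}"
  proof (rule has_integral_to_inf)
    show "(\<lambda>T. Gprop a gs X Y T) integrable_on {0..y}" for y
    proof (cases "y \<ge> 0")
      case True then show ?thesis using hint by blast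
    next
      case False then have "{0..y} = {}" by simp
      then show ?thesis by (simp add: integrable_on_empty)
    qed
    show "Gprop a gs X Y y \<ge> 0" if "y \<ge> 0" for y using nonneg that .
    have ev: "eventually (\<lambda>y. integral {0..y} (\<lambda>T. Gprop a gs X Y T) = A y - A 0) at_top"
      using eventually_ge_at_top[of "0::real"] by (rule eventually_mono) (use hint integral_unique in blast)
    have shift: "filterlim (\<lambda>y. y + Z1inv a gs X) at_top at_top" by real_asymp
    have z: "((\<lambda>y. Z1 a gs (y + Z1inv a gs X)) \<longlongrightarrow> a) at_top"
      by (rule filterlim_compose[OF Z1_lims(1) shift])
    have "(A \<longlongrightarrow> - ln (Y + a) / Wbar a gs X) at_top"
      unfolding A_def using Y a WX by (intro tendsto_intros z) auto
    then have "((\<lambda>y. A y - A 0) \<longlongrightarrow> - ln (Y + a) / Wbar a gs X - A 0) at_top"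
      by (intro tendsto_intros)
    then show "((\<lambda>y. integral {0..y} (\<lambda>T. Gprop a gs X Y T)) \<longlongrightarrow> - ln (Y + a) / Wbar a gs X - A 0) at_top"
      using ev by (simp add: filterlim_cong)
  qed
  moreover have "- ln (Y + a) / Wbar a gs X - A 0 = (ln (Y + X) - ln (Y + a)) / Wbar a gs X"
    unfolding A_def using p WX by (simp add: field_simps)
  ultimately show ?thesis by simp
qed


lemma final_lim: "X > a \<Longrightarrow>
       ((\<lambda>Y. Y * integral {0..} (\<lambda>T. Gprop a gs X Y T))
          \<longlongrightarrow> (a - X) / deriv (Z1 a gs) (Z1inv a gs X)) at_top \<and>
       (a - X) / deriv (Z1 a gs) (Z1inv a gs X) = 1 / sqrt ((X + a)^2 - 2 * gs / a)"
proof -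
  assume X: "X > a"
  have p: "Z1inv a gs X > 0" "Z1 a gs (Z1inv a gs X) = X" using Z1inv_props[OF X] by auto
  have WX: "Wbar a gs X > 0" using W_pos[OF X] .
  have dv: "deriv (Z1 a gs) (Z1inv a gs X) = - Wbar a gs X"
    using DERIV_imp_deriv[OF Z1_der[OF p(1)]] p by simp
  have eq1: "(a - X) / deriv (Z1 a gs) (Z1inv a gs X) = (X - a) / Wbar a gs X"
    unfolding dv using WX by (simp add: field_simps)
  have l0: "((\<lambda>Y. Y * (ln (Y+X) - ln (Y+a))) \<longlongrightarrow> (X-a)) at_top"
    using X a by real_asymp
  have l1: "((\<lambda>Y. Y * (ln (Y+X) - ln (Y+a)) / Wbar a gs X) \<longlongrightarrow> (X-a) / Wbar a gs X) at_top"
    by (rule tendsto_divide[OF l0 tendsto_const]) (use WX in simp)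
  have ev: "eventually (\<lambda>Y. Y * (ln (Y+X) - ln (Y+a)) / Wbar a gs X = Y * integral {0..} (\<lambda>T. Gprop a gs X Y T)) at_top"
    using eventually_gt_at_top[of "0::real"]
  proof (rule eventually_mono)
    fix Y :: real assume Y: "Y > 0"
    have "integral {0..} (\<lambda>T. Gprop a gs X Y T) = (ln (Y + X) - ln (Y + a)) / Wbar a gs X"
      by (rule integral_unique[OF Gint[OF X Y]])
    then show "Y * (ln (Y+X) - ln (Y+a)) / Wbar a gs X = Y * integral {0..} (\<lambda>T. Gprop a gs X Y T)"
      by simp
  qed
  have "((\<lambda>Y. Y * integral {0..} (\<lambda>T. Gprop a gs X Y T)) \<longlongrightarrow> (X - a) / Wbar a gs X) at_top"
    using l1 ev by (rule Lim_transform_eventually)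
  moreover have "(X - a) / Wbar a gs X = 1 / sqrt ((X + a)^2 - 2 * gs / a)"
    unfolding Wbar_def using X by simp
  ultimately show ?thesis using eq1 by simp
qed

end

theorem mainTheorem10:
  fixes lam gs \<alpha> :: real
  assumes "lam > 0" and "gs > 0" and "\<alpha> > 0"
    and "\<alpha>^3 - lam * \<alpha> + gs = 0" and "2 * \<alpha>^3 > gs"
  shows "strict_antimono_on {0<..} (Z1 \<alpha> gs) \<and> bij_betw (Z1 \<alpha> gs) {0<..} {\<alpha><..} \<and>
    (\<forall>X Y. X > \<alpha> \<longrightarrow> Y > 0 \<longrightarrow> Gprop \<alpha> gs X Y 0 = 1 / (X + Y)) \<and>
    (\<forall>X Y T. X > \<alpha> \<longrightarrow> Y > 0 \<longrightarrow> T \<ge> 0 \<longrightarrow>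
       (\<exists>D. ((\<lambda>t. Gprop \<alpha> gs X Y t) has_real_derivative D) (at T within {0..}) \<and>
            ((\<lambda>x. Wbar \<alpha> gs x * Gprop \<alpha> gs x Y T) has_real_derivative (- D)) (at X))) \<and>
    (\<forall>X Y. X > \<alpha> \<longrightarrow> Y > 0 \<longrightarrow> (\<lambda>T. Gprop \<alpha> gs X Y T) integrable_on {0..}) \<and>
    (\<forall>X. X > \<alpha> \<longrightarrow>
       ((\<lambda>Y. Y * integral {0..} (\<lambda>T. Gprop \<alpha> gs X Y T))
          \<longlongrightarrow> (\<alpha> - X) / deriv (Z1 \<alpha> gs) (Z1inv \<alpha> gs X)) at_top \<and>
       (\<alpha> - X) / deriv (Z1 \<alpha> gs) (Z1inv \<alpha> gs X) = 1 / sqrt ((X + \<alpha>)^2 - 2 * gs / \<alpha>))"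
proof -
  note g = assms(2,3,5)
  show ?thesis
    apply (intro conjI)
         apply (rule Z1_mono[OF g])
        apply (rule Z1_bij[OF g])
       apply (use G0[OF g] in blast)
      apply (use PDE[OF g] in blast)
     apply (use Gint[OF g] has_integral_integrable in blast)
    apply (use final_lim[OF g] in blast)
    done
qed

end
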